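(* Let $\{\alpha_k^{c}\}$ and $\{\tilde\alpha_k^{c}\}$ be the sequences of actual and tentative continuous stepsizes yielded by Algorithm DFNDFL (described in the context) along the directions $s_k\in D^c(x_k)$. Then \[ \lim_{k\to\infty}\max \{\alpha_k^{c}, \tilde \alpha_k^{c}\} = 0. \]
   Context: Consider the problem $\min f(x)$ s.t. $x\in X\cap\mathcal{Z}$, where $X=\{x\in\mathbb{R}^n: l\le x\le u\}$ is compact (with $l_i<u_i$, and $l_i,u_i\in\mathbb{Z}$ for $i\in I^z$), $\mathcal{Z}=\{x\in\mathbb{R}^n: x_i\in\mathbb{Z},\ i\in I^z\}$, $I^c\cup I^z=\{1,\dots,n\}$, $I^c\cap I^z=\emptyset$, and $f$ is continuous and Lipschitz continuous with respect to the continuous variables $x_i$, $i\in I^c$. $[x]_{[l,u]}=\max\{l,\min\{u,x\}\}$ denotes projection onto $X$. $D^c(x)$ is the cone of vectors $s$ with $s_i=0$ for $i\in I^z$, $s_i\ge0$ if $i\in I^c$ and $x_i=l_i$, $s_i\le 0$ if $i\in I^c$ and $x_i=u_i$. Projected Continuous Search$(\tilde\alpha,w,p;\alpha,\tilde p)$ with data $\gamma>0$, $\delta\in(0,1)$: set $\alpha=\tilde\alpha$; if $f([w+\alpha p]_{[l,u]})\le f(w)-\gamma\alpha^2$ set $\tilde p=p$, else if $f([w-\alpha p]_{[l,u]})\le f(w)-\gamma\alpha^2$ set $\tilde p=-p$, else return $\alpha=0$, $\tilde p=p$; in the successful case repeatedly set $\beta=\alpha/\delta$ and, while $f([w+\beta\tilde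 p]_{[l,u]})\le f(w)-\gamma\beta^2$, set $\alpha=\beta$; return $\alpha,\tilde p$. Algorithm DFNDFL: start from $x_0\in X\cap\mathcal{Z}$, $\xi_0>0$, $\theta\in(0,1)$, a sequence $\{s_k\}$ with $s_k\in D^c(x_0)$, $\|s_k\|=1$, and $\tilde\alpha_0^c=1$. At iteration $k$, Phase 1 computes $\alpha_k^c,\tilde s_k$ by the Projected Continuous Search$(\tilde\alpha_k^c,x_k,s_k)$; if $\alpha_k^c=0$ then $\tilde\alpha_{k+1}^c=\theta\tilde\alpha_k^c$ and $\tilde x_k=x_k$, otherwise $\tilde\alpha_{k+1}^c=\alpha_k^c$ and $\tilde x_k=[x_k+\alpha_k^c\tilde s_k]_{[l,u]}$. Phase 2 then explores feasible primitive integer directions (directions with zero continuous part and integer part having greatest common divisor 1) by a Discrete Search requiring sufficient decrease $f(w+\alpha p)\le f(w)-\xi_k$, producing a point $y^+\in X\cap\mathcal{Z}$ with $f(y^+)\le f(\tilde x_k)$, and updates $\xi_k$ (nonincreasingly). Phase 3 chooses any $x_{k+1}\in X\cap\mathcal{Z}$ with $f(x_{k+1})\le f(y^+)$. Hence $f(x_{k+1})\le f(\tilde x_k)\le f(x_k)$ for all $k$. *)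

theory Defs
  imports "HOL-Analysis.Analysis"
begin

text \<open>Vectors live in real^'n for an arbitrary finite index type 'n; Iz is the set of
 integer indices, its complement the continuous indices.\<close>

definition boxX :: "real^'n \<Rightarrow> real^'n \<Rightarrow> (real^'n) set" where
  "boxX l u = {x. \<forall>i. l$i \<le> x$i \<and> x$i \<le> u$i}"

definition intZ :: "'n set \<Rightarrow> (real^'n) set" where
  "intZ Iz = {x. \<forall>i\<in>Iz. x$i \<in> \<int>}"

definition proj :: "real^'n \<Rightarrow> real^'n \<Rightarrow> real^'n \<Rightarrow> real^'n" where
  "proj l u x = (\<chi> i. max (l$i) (min (u$i) (x$i)))"

definition Dc :: "'n set \<Rightarrow> real^'n \<Rightarrow> real^'n \<Rightarrow> real^'n \<Rightarrow> (real^'n) set" where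
  "Dc Iz l u x = {s. (\<forall>i\<in>Iz. s$i = 0) \<and>
      (\<forall>i. i \<notin> Iz \<and> x$i = l$i \<longrightarrow> s$i \<ge> 0) \<and>
      (\<forall>i. i \<notin> Iz \<and> x$i = u$i \<longrightarrow> s$i \<le> 0)}"

text \<open>Expansion loop of the Projected Continuous Search, started with accepted step a0
 along direction p: the returned step is a0/delta^j where the steps a0/delta^i, i \<le> j,
 all pass the sufficient-decrease test and a0/delta^(j+1) fails it.\<close>
definition pcs_expand ::
  "(real^'n \<Rightarrow> real) \<Rightarrow> real^'n \<Rightarrow> real^'n \<Rightarrow> real \<Rightarrow> real \<Rightarrow>
   real \<Rightarrow> real^'n \<Rightarrow> real^'n \<Rightarrow> real \<Rightarrow> bool" where
  "pcs_expand f l u \<gamma> \<delta> a0 w p a \<longleftrightarrow>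
     (\<exists>j::nat. a = a0 / \<delta>^j \<and>
        (\<forall>i\<le>j. f (proj l u (w + (a0 / \<delta>^i) *\<^sub>R p)) \<le> f w - \<gamma> * (a0 / \<delta>^i)^2) \<and>
        \<not> (f (proj l u (w + (a0 / \<delta>^(Suc j)) *\<^sub>R p)) \<le> f w - \<gamma> * (a0 / \<delta>^(Suc j))^2))"

definition pcs ::
  "(real^'n \<Rightarrow> real) \<Rightarrow> real^'n \<Rightarrow> real^'n \<Rightarrow> real \<Rightarrow> real \<Rightarrow>
   real \<Rightarrow> real^'n \<Rightarrow> real^'n \<Rightarrow> real \<Rightarrow> real^'n \<Rightarrow> bool" where
  "pcs f l u \<gamma> \<delta> ta w p a pt \<longleftrightarrow>
     (if f (proj l u (w + ta *\<^sub>R p)) \<le> f w - \<gamma> * ta^2 then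
        pt = p \<and> pcs_expand f l u \<gamma> \<delta> ta w pt a
      else if f (proj l u (w - ta *\<^sub>R p)) \<le> f w - \<gamma> * ta^2 then
        pt = - p \<and> pcs_expand f l u \<gamma> \<delta> ta w pt a
      else a = 0 \<and> pt = p)"

end

theory Submission
  imports Defs
begin

theorem mainTheorem7:
  fixes f :: "real^'n \<Rightarrow> real" and l u :: "real^'n" and Iz :: "'n set"
    and \<gamma> \<delta> \<theta> :: real
    and x s xt st y :: "nat \<Rightarrow> real^'n" and ac ta \<xi> :: "nat \<Rightarrow> real"
  assumes lu: "\<And>i. l$i < u$i"
    and lu_int: "\<And>i. i \<in> Iz \<Longrightarrow> l$i \<in> \<int> \<and> u$i \<in> \<int>"
    and f_cont: "continuous_on UNIV f"
    and f_lip: "\<exists>L. \<forall>v w. (\<forall>i\<in>Iz. v$i = w$i) \<longrightarrow> \<bar>f v - f w\<bar> \<le> L * norm (v - w)"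
    and \<gamma>: "\<gamma> > 0" and \<delta>: "0 < \<delta>" "\<delta> < 1" and \<theta>: "0 < \<theta>" "\<theta> < 1"
    and x0: "x 0 \<in> boxX l u \<inter> intZ Iz"
    and \<xi>0: "\<xi> 0 > 0"
    and ta0: "ta 0 = 1"
    and s_dir: "\<And>k. s k \<in> Dc Iz l u (x k) \<and> norm (s k) = 1"
    and phase1: "\<And>k. pcs f l u \<gamma> \<delta> (ta k) (x k) (s k) (ac k) (st k)"
    and upd0: "\<And>k. ac k = 0 \<Longrightarrow> ta (Suc k) = \<theta> * ta k \<and> xt k = x k"
    and upd1: "\<And>k. ac k \<noteq> 0 \<Longrightarrow> ta (Suc k) = ac k \<and> xt k = proj l u (x k + ac k *\<^sub>R st k)"
    and phase2: "\<And>k. y k \<in> boxX l u \<inter> intZ Iz \<and> f (y k) \<le> f (xt k)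
                       \<and> 0 < \<xi> (Suc k) \<and> \<xi> (Suc k) \<le> \<xi> k"
    and phase3: "\<And>k. x (Suc k) \<in> boxX l u \<inter> intZ Iz \<and> f (x (Suc k)) \<le> f (y k)"
  shows "(\<lambda>k. max (ac k) (ta k)) \<longlonglongrightarrow> 0"
proof -
  have acform: "ac k \<noteq> 0 \<Longrightarrow> (\<exists>j. ac k = ta k / \<delta>^j) \<and>
      f (proj l u (x k + ac k *\<^sub>R st k)) \<le> f (x k) - \<gamma> * (ac k)^2" for k
    using phase1[of k] unfolding pcs_def pcs_expand_def
    by (auto split: if_splits)
  have tapos: "ta k > 0" for k
  proof (induction k)
    case 0 then show ?case using ta0 by simp
  next
    case (Suc k)
    show ?case
    proof (cases "ac k = 0")
      case True then show ?thesis using upd0[of k] Suc \<theta> by simp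
    next
      case False
      then obtain j where "ac k = ta k / \<delta>^j" using acform by blast
      then show ?thesis using upd1[of k] False Suc \<delta> by simp
    qed
  qed
  have acnn: "ac k \<ge> 0" for k
  proof (cases "ac k = 0")
    case False
    then obtain j where "ac k = ta k / \<delta>^j" using acform by blast
    then show ?thesis using tapos[of k] \<delta> by simp
  qed simp
  have dec: "f (x (Suc k)) \<le> f (x k) - \<gamma> * (ac k)^2" for k
  proof (cases "ac k = 0")
    case True then show ?thesis using upd0[of k] phase2[of k] phase3[of k] by simp
  next
    case False then show ?thesis using upd1[of k] acform[of k] phase2[of k] phase3[of k] by simp
  qed
  have inbox: "x k \<in> boxX l u" for k
    using x0 phase3 by (cases k) auto
  have bx: "boxX l u = cbox l u"
    unfolding boxX_def by (auto simp: mem_box_cart)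
  have "compact (f ` cbox l u)"
    by (rule compact_continuous_image) (use f_cont continuous_on_subset in auto)
  then obtain B where B: "\<forall>z\<in>f ` cbox l u. norm z \<le> B"
    using compact_imp_bounded bounded_iff by blast
  have fB: "f (x k) \<ge> - B" for k
    using B inbox[of k] bx by force
  have psum: "f (x n) \<le> f (x 0) - \<gamma> * (\<Sum>k<n. (ac k)^2)" for n
  proof (induction n)
    case (Suc n) then show ?case using dec[of n] by (simp add: algebra_simps)
  qed simp
  have "summable (\<lambda>k. (ac k)^2)"
  proof (rule summableI_nonneg_bounded)
    fix n
    show "(\<Sum>k<n. (ac k)^2) \<le> (f (x 0) + B) / \<gamma>"
      using psum[of n] fB[of n] \<gamma> by (simp add: field_simps)
  qed simp
  then have "(\<lambda>k. (ac k)^2) \<longlonglongrightarrow> 0" by (rule summable_LIMSEQ_zero)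
  then have "(\<lambda>k. sqrt ((ac k)^2)) \<longlonglongrightarrow> sqrt 0" by (rule tendsto_real_sqrt)
  then have aclim: "ac \<longlonglongrightarrow> 0" using acnn by simp
  have talim: "ta \<longlonglongrightarrow> 0"
  proof (rule LIMSEQ_I)
    fix r :: real assume r: "0 < r"
    from aclim r obtain K where K: "\<And>n. n \<ge> K \<Longrightarrow> norm (ac n) < r/2"
      using LIMSEQ_D[of ac 0 "r/2"] by auto
    have ind: "ta (K+m) \<le> r/2 + \<theta>^m * ta K" for m
    proof (induction m)
      case (Suc m)
      show ?case
      proof (cases "ac (K+m) = 0")
        case True
        then have "ta (K + Suc m) = \<theta> * ta (K+m)" using upd0 by simp
        also have "\<dots> \<le> \<theta> * (r/2 + \<theta>^m * ta K)"
          using Suc \<theta> by (simp add: mult_left_mono)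
        also have "\<dots> \<le> r/2 + \<theta>^Suc m * ta K"
          using \<theta> r by (simp add: algebra_simps)
        finally show ?thesis .
      next
        case False
        then have "ta (K + Suc m) = ac (K+m)" using upd1 by simp
        also have "\<dots> < r/2" using K[of "K+m"] by simp
        also have "\<dots> \<le> r/2 + \<theta>^Suc m * ta K"
          using \<theta> tapos[of K] by simp
        finally show ?thesis by simp
      qed
    qed (use r in simp)
    have "r/2 / ta K > 0" using r tapos[of K] by simp
    then obtain M where M: "\<theta>^M < r/2 / ta K" using real_arch_pow_inv \<theta> by blast
    show "\<exists>no. \<forall>n\<ge>no. norm (ta n - 0) < r"
    proof (intro exI allI impI)
      fix n assume n: "n \<ge> K + M"
      have "\<theta>^(n-K) \<le> \<theta>^M" using n \<theta> by (intro power_decreasing) auto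
      moreover have "\<theta>^M * ta K < r/2" using M tapos[of K]
        by (simp add: pos_less_divide_eq)
      ultimately have "\<theta>^(n-K) * ta K < r/2" using tapos[of K]
        by (meson mult_right_mono less_imp_le order_le_less_trans)
      moreover have "ta n \<le> r/2 + \<theta>^(n-K) * ta K" using ind[of "n-K"] n by simp
      ultimately show "norm (ta n - 0) < r" using tapos[of n] by simp
    qed
  qed
  have "(\<lambda>k. max (ac k) (ta k)) \<longlonglongrightarrow> max 0 0"
    by (intro tendsto_max aclim talim)
  then show ?thesis by simp
qed

end
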